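(* Let $K(t,u)=1+\frac{14}{15}\sqrt[5]{4\left(t-\frac12\right)\left(u-\frac12\right)}$ for $t,u\in[0,1]$. The Hammerstein operator $(H_2f)(t)=\int_0^1K(t,u)f^2(u)\,du$ on $C[0,1]$ has at least two distinct strictly positive fixed points.
   Context: For real $s$, $\sqrt[5]{s}$ denotes the real fifth root (negative for $s<0$). *)

theory Defs
  imports "HOL-Analysis.Analysis"
begin

text \<open>Kernel K(t,u) = 1 + (14/15) * real fifth root of 4(t-1/2)(u-1/2).
  Note: root 5 is the odd real fifth root (negative for negative arguments).\<close>
definition K :: "real \<Rightarrow> real \<Rightarrow> real" where
  "K t u = 1 + (14/15) * root 5 (4 * (t - 1/2) * (u - 1/2))"

definition H2 :: "(real \<Rightarrow> real) \<Rightarrow> real \<Rightarrow> real" where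
  "H2 f t = integral {0..1} (\<lambda>u. K t u * (f u)^2)"

definition pos_fixed_point :: "(real \<Rightarrow> real) \<Rightarrow> bool" where
  "pos_fixed_point f \<longleftrightarrow> continuous_on {0..1} f \<and> (\<forall>t\<in>{0..1}. f t > 0)
     \<and> (\<forall>t\<in>{0..1}. H2 f t = f t)"

end

theory Submission
  imports Defs
begin

definition psi :: "real \<Rightarrow> real" where "psi u = root 5 (2*u-1)"

lemma psi_deriv:
  assumes "u \<noteq> 1/2"
  shows "((\<lambda>u. psi u ^ (n+5)) has_real_derivative (real (n+5) * 2 / 5 * psi u ^ n)) (at u)"
proof -
  have nz: "2*u-1 \<noteq> 0" using assms by auto
  have p0: "psi u \<noteq> 0" using nz unfolding psi_def by simp
  have d1: "(psi has_real_derivative (inverse (real 5 * root 5 (2*u-1) ^ 4) * 2)) (at u)"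
  proof -
    have r: "(root 5 has_real_derivative inverse (real 5 * root 5 (2*u-1) ^ 4)) (at (2*u-1))"
      using DERIV_odd_real_root[of 5 "2*u-1"] nz by simp
    have l: "((\<lambda>u. 2*u-1) has_real_derivative 2) (at u)"
      by (auto intro!: derivative_eq_intros)
    show ?thesis using DERIV_chain2[OF r l] by (simp add: psi_def[abs_def])
  qed
  have d2: "((\<lambda>u. psi u ^ (n+5)) has_real_derivative (real (n+5) * psi u ^ (n+5 - Suc 0) * (inverse (real 5 * root 5 (2*u-1) ^ 4) * 2))) (at u)"
    using DERIV_power[OF d1, of "n+5"] by (simp add: mult_ac) 
  have "real (n+5) * psi u ^ (n+5 - Suc 0) * (inverse (real 5 * root 5 (2*u-1) ^ 4) * 2) = real (n+5) * 2 / 5 * psi u ^ n"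
    using p0 unfolding psi_def[symmetric] by (simp add: field_simps power_add)
  with d2 show ?thesis by metis
qed

lemma psi_moment:
  "((\<lambda>u. psi u ^ n) has_integral (5 / (2 * real (n+5)) * (1 - (-1)^(n+5)))) {0..1}"
proof -
  define F where "F u = 5 / (2 * real (n+5)) * psi u ^ (n+5)" for u
  have "((\<lambda>u. psi u ^ n) has_integral (F 1 - F 0)) {0..1}"
  proof (rule fundamental_theorem_of_calculus_interior_strong[of "{1/2}"])
    fix x::real assume "x \<in> {0<..<1} - {1/2}"
    then have "x \<noteq> 1/2" by auto
    from DERIV_cmult[OF psi_deriv[OF this, of n], of "5 / (2 * real (n+5))"]
    moreover have "5 / (2 * real (n+5)) * (real (n+5) * 2 / 5 * psi x ^ n) = psi x ^ n"
      by (simp add: field_simps)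
    ultimately have "(F has_real_derivative psi x ^ n) (at x)" unfolding F_def[abs_def] by simp
    then show "(F has_vector_derivative psi x ^ n) (at x)"
      by (simp add: has_real_derivative_iff_has_vector_derivative)
  next
    show "continuous_on {0..1} F" unfolding F_def psi_def by (intro continuous_intros)
  qed auto
  moreover have "F 1 - F 0 = 5 / (2 * real (n+5)) * (1 - (-1)^(n+5))"
    unfolding F_def psi_def by (simp add: right_diff_distrib real_root_minus power_minus')
  ultimately show ?thesis by simp
qed

lemma K_psi: "K t u = 1 + 14/15 * psi t * psi u"
proof -
  have "4 * (t - 1/2) * (u - 1/2) = (2*t-1)*(2*u-1)" by (simp add: algebra_simps)
  then show ?thesis unfolding K_def psi_def by (simp add: real_root_mult)
qed

lemma H2_affine: "H2 (\<lambda>u. a + b * psi u) t = a^2 + 5/7 * b^2 + 4/3 * a * b * psi t"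
proof -
  define c where "c = 14/15 * psi t"
  have m0: "((\<lambda>u. psi u ^ 0) has_integral 1) {0..1}" using psi_moment[of 0] by simp
  have m1: "((\<lambda>u. psi u ^ 1) has_integral 0) {0..1}" using psi_moment[of 1] by simp
  have m2: "((\<lambda>u. psi u ^ 2) has_integral 5/7) {0..1}" using psi_moment[of 2] by simp
  have m3: "((\<lambda>u. psi u ^ 3) has_integral 0) {0..1}" using psi_moment[of 3] by simp
  have "((\<lambda>u. a^2 * psi u ^ 0 + (2*a*b + c*a^2) * psi u ^ 1 + (b^2 + 2*a*b*c) * psi u ^ 2 + c*b^2 * psi u ^ 3)
      has_integral (a^2 * 1 + (2*a*b + c*a^2) * 0 + (b^2 + 2*a*b*c) * (5/7) + c*b^2 * 0)) {0..1}"
    by (intro has_integral_add has_integral_mult_right m0 m1 m2 m3)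
  moreover have "(\<lambda>u. a^2 * psi u ^ 0 + (2*a*b + c*a^2) * psi u ^ 1 + (b^2 + 2*a*b*c) * psi u ^ 2 + c*b^2 * psi u ^ 3)
     = (\<lambda>u. K t u * (a + b * psi u)^2)"
    by (rule ext) (simp add: K_psi c_def power2_eq_square power3_eq_cube algebra_simps)
  ultimately have "((\<lambda>u. K t u * (a + b * psi u)^2) has_integral (a^2 + 5/7 * b^2 + 4/3 * a * b * psi t)) {0..1}"
    by (simp add: c_def algebra_simps)
  then show ?thesis unfolding H2_def by (rule integral_unique)
qed

lemma psi_bound: "t \<in> {0..1} \<Longrightarrow> \<bar>psi t\<bar> \<le> 1"
proof -
  assume "t \<in> {0..1}"
  then have "\<bar>2*t-1\<bar> \<le> 1" by auto
  then have "root 5 \<bar>2*t-1\<bar> \<le> root 5 1" by simp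
  then show ?thesis unfolding psi_def by (simp add: real_root_abs)
qed


lemma affine_fp:
  assumes "a^2 + 5/7 * b^2 = a" "4/3 * a * b = b" "\<bar>b\<bar> < a"
  shows "pos_fixed_point (\<lambda>u. a + b * psi u)"
  unfolding pos_fixed_point_def
proof (intro conjI ballI)
  show "continuous_on {0..1} (\<lambda>u. a + b * psi u)" unfolding psi_def by (intro continuous_intros)
next
  fix t :: real assume t: "t \<in> {0..1}"
  have "\<bar>b * psi t\<bar> \<le> \<bar>b\<bar>" using psi_bound[OF t]
    by (simp add: abs_mult mult_left_le)
  then show "0 < a + b * psi t" using assms(3) by linarith
next
  fix t :: real
  show "H2 (\<lambda>u. a + b * psi u) t = a + b * psi t"
  proof -
    have "H2 (\<lambda>u. a + b * psi u) t = (a^2 + 5/7 * b^2) + (4/3 * a * b) * psi t"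
      by (simp add: H2_affine)
    also have "\<dots> = a + b * psi t" by (simp only: assms(1,2))
    finally show ?thesis .
  qed
qed

theorem proposition3p1:
  shows "\<exists>f g. pos_fixed_point f \<and> pos_fixed_point g \<and> (\<exists>t\<in>{0..1}. f t \<noteq> g t)"
proof -
  define b where "b = sqrt (21/80)"
  have b2: "b^2 = 21/80" unfolding b_def by simp
  have b0: "b \<ge> 0" unfolding b_def by simp
  have bl: "b < 3/4"
  proof (rule ccontr)
    assume "\<not> b < 3/4"
    then have "(3/4)^2 \<le> b^2" by (intro power_mono) auto
    moreover have "(3/4::real)^2 = 9/16" by (simp add: power2_eq_square)
    ultimately show False using b2 by linarith
  qed
  have f1: "pos_fixed_point (\<lambda>u. 1 + 0 * psi u)" by (rule affine_fp) auto
  have f2: "pos_fixed_point (\<lambda>u. 3/4 + b * psi u)"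
    by (rule affine_fp) (use b2 b0 bl in \<open>auto simp: power2_eq_square\<close>)
  have p1: "psi 1 = 1" unfolding psi_def by simp
  have "b \<noteq> 1/4" proof assume "b = 1/4" with b2 show False by (simp add: power2_eq_square) qed
  then have "1 + 0 * psi 1 \<noteq> 3/4 + b * psi 1" using p1 by auto
  then show ?thesis using f1 f2 by force
qed

end
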